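(* In the cone setting of the context, for any $h\in\mathcal C_{\mathbb C}$ and all $\ell\in\mathcal C'_{\mathbb C}$, \[|\ell(h)|\ge e^{-\delta_{\mathcal C}(h,e)}\frac{\kappa}{\sqrt2}\|h\|\,|\ell(e)|.\]
   Context: Cone setting. $V$ is a real topological vector space, $\mathcal S\subset V'$ a set of linear functionals such that $\ell(x)=0$ for all $\ell\in\mathcal S$ implies $x=0$, $C_{\mathbb R}=\{h\in V\setminus\{0\}:\ell(h)\ge0\ \forall\ell\in\mathcal S\}$, and $e\in C_{\mathbb R}$ is such that for every $h\in V$ some $\lambda\ge0$ has $\lambda e-h\in C_{\mathbb R}$. Norm $\|h\|=\inf\{\lambda\ge0:\ell(\lambda e\pm h)\ge0\ \forall\ell\in\mathcal S\}$; $\mathcal B_{\mathbb R}$ the completion of $V$; $\mathcal C_{\mathbb R}=\{h\in\mathcal B_{\mathbb R}\setminus\{0\}:\ell(h)\ge0\ \forall\ell\in\mathcal S\}$. $\mathcal S_*$ is the weak-$*$ closure of the convex hull of $\{\lambda\ell:\lambda>0,\ell\in\mathcal S\}$; there exist $m\in\mathcal S_*$, $\kappa\in(0,1)$ with $m(e)=1$ and $m(h)\ge\kappa\|h\|$ on $\mathcal C_{\mathbb R}$. $\mathcal B_{\mathbb C}$ is the complexification (norm $\|x+iy\|=\sup_\theta(\|\Re(e^{i\theta}(x+iy))\|^2+\|\Im(e^{i\theta}(x+iy))\|^2)^{1/2}$), real functionals extended complex-linearly. $\mathcal C_{\mathbb C}=\{z(x+iy):z\ne0,x,y\in\mathcal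 C_{\mathbb R}\}$, $\mathcal C'_{\mathbb C}=\{\ell\in\mathcal B'_{\mathbb C}:\ell(h)\ne0\ \forall h\in\mathcal C_{\mathbb C}\}$. For $h,g\in\mathcal C_{\mathbb C}$, $E(h,g)=\{\ell(h)/\ell(g):\ell\in\mathcal C'_{\mathbb C}\}$ and $\delta_{\mathcal C}(h,g)=\ln\frac{\sup_{z\in E(h,g)}|z|}{\inf_{z\in E(h,g)}|z|}$. *)

theory Defs
  imports "HOL-Analysis.Analysis"
begin

text \<open>The real Banach space 'b plays the role of the completion B_R of V
(V is a dense linear subspace of 'b).  Functionals in S are given by their
(unique) continuous extensions to B_R.\<close>

definition coneR :: "('b::real_vector \<Rightarrow> real) set \<Rightarrow> 'b set" where
  "coneR S = {h. h \<noteq> 0 \<and> (\<forall>l\<in>S. l h \<ge> 0)}"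

definition ou_norm :: "('b::real_vector \<Rightarrow> real) set \<Rightarrow> 'b \<Rightarrow> 'b \<Rightarrow> real" where
  "ou_norm S e h = Inf {lam. lam \<ge> 0 \<and> (\<forall>l\<in>S. l (lam *\<^sub>R e + h) \<ge> 0 \<and> l (lam *\<^sub>R e - h) \<ge> 0)}"

definition pos_mult_hull :: "('b \<Rightarrow> real) set \<Rightarrow> ('b \<Rightarrow> real) set" where
  "pos_mult_hull S = {(\<lambda>x. \<Sum>i<n. w i * p i x) | (n::nat) (w::nat \<Rightarrow> real) (p::nat \<Rightarrow> 'b \<Rightarrow> real).
      n > 0 \<and> (\<forall>i<n. w i \<ge> 0 \<and> (\<exists>c l. c > 0 \<and> l \<in> S \<and> p i = (\<lambda>x. c * l x)))
      \<and> (\<Sum>i<n. w i) = 1}"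

text \<open>S_*: weak-* closure (= closure for pointwise convergence, inside the dual
of B_R) of the above convex hull.\<close>
definition S_star :: "('b::real_normed_vector \<Rightarrow> real) set \<Rightarrow> ('b \<Rightarrow> real) set" where
  "S_star S = {m. bounded_linear m \<and> m \<in> closure (pos_mult_hull S)}"

text \<open>Complexification B_C = B_R x B_R, (x,y) standing for x + i y.\<close>
definition cmult :: "complex \<Rightarrow> 'b::real_vector \<times> 'b \<Rightarrow> 'b \<times> 'b" where
  "cmult z u = (Re z *\<^sub>R fst u - Im z *\<^sub>R snd u, Im z *\<^sub>R fst u + Re z *\<^sub>R snd u)"

definition normC :: "'b::real_normed_vector \<times> 'b \<Rightarrow> real" where
  "normC u = (SUP th\<in>UNIV. sqrt ((norm (cos th *\<^sub>R fst u - sin th *\<^sub>R snd u))\<^sup>2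
                              + (norm (sin th *\<^sub>R fst u + cos th *\<^sub>R snd u))\<^sup>2))"

definition dualC :: "('b::real_normed_vector \<times> 'b \<Rightarrow> complex) set" where
  "dualC = {L. (\<forall>u v. L (u + v) = L u + L v) \<and> (\<forall>z u. L (cmult z u) = z * L u)
              \<and> (\<exists>K. \<forall>u. cmod (L u) \<le> K * normC u)}"

definition coneC :: "('b::real_vector \<Rightarrow> real) set \<Rightarrow> ('b \<times> 'b) set" where
  "coneC S = {cmult z (x, y) | z x y. z \<noteq> 0 \<and> x \<in> coneR S \<and> y \<in> coneR S}"

definition dual_coneC :: "('b::real_normed_vector \<Rightarrow> real) set \<Rightarrow> ('b \<times> 'b \<Rightarrow> complex) set" where
  "dual_coneC S = {L \<in> dualC. \<forall>h\<in>coneC S. L h \<noteq> 0}"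

definition E_set :: "('b::real_normed_vector \<Rightarrow> real) set \<Rightarrow> 'b \<times> 'b \<Rightarrow> 'b \<times> 'b \<Rightarrow> complex set" where
  "E_set S h g = {L h / L g | L. L \<in> dual_coneC S}"

definition deltaC :: "('b::real_normed_vector \<Rightarrow> real) set \<Rightarrow> 'b \<times> 'b \<Rightarrow> 'b \<times> 'b \<Rightarrow> ereal" where
  "deltaC S h g =
    (let s = Sup ((\<lambda>z. ereal (cmod z)) ` E_set S h g);
         i = Inf ((\<lambda>z. ereal (cmod z)) ` E_set S h g)
     in if 0 < i \<and> s < \<infinity> then ereal (ln (real_of_ereal s / real_of_ereal i)) else \<infinity>)"

end

theory Submission imports Defs begin

lemma sq_bound:
  fixes u v A B :: real
  assumes "u \<ge> 0" "v \<ge> 0" "A \<ge> 0" "B \<ge> 0"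
  shows "(u * A + v * B)^2 + (v * A + u * B)^2 \<le> 2*(u^2+v^2)*(A^2+B^2)"
proof -
  have "2 * u * v \<le> u^2+v^2" using sum_squares_bound by (metis mult.assoc power2_eq_square)
  moreover have "2 * A * B \<le> A^2+B^2" using sum_squares_bound by (metis mult.assoc power2_eq_square)
  ultimately have "(2 * u * v)*(2 * A * B) \<le> (u^2+v^2)*(A^2+B^2)"
    using assms by (intro mult_mono) auto
  then show ?thesis by (simp add: power2_eq_square algebra_simps)
qed

lemma normC_term_bound:
  fixes x y :: "'b::real_normed_vector"
  shows "sqrt ((norm (cos th *\<^sub>R x - sin th *\<^sub>R y))\<^sup>2 + (norm (sin th *\<^sub>R x + cos th *\<^sub>R y))\<^sup>2)
     \<le> 2 * (norm x + norm y)"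
proof -
  have c: "\<bar>cos th\<bar> \<le> 1" "\<bar>sin th\<bar> \<le> 1" by auto
  have n1: "norm (cos th *\<^sub>R x - sin th *\<^sub>R y) \<le> norm x + norm y"
  proof -
    have "norm (cos th *\<^sub>R x - sin th *\<^sub>R y) \<le> \<bar>cos th\<bar> * norm x + \<bar>sin th\<bar> * norm y"
      using norm_triangle_ineq4[of "cos th *\<^sub>R x" "sin th *\<^sub>R y"] by simp
    also have "\<dots> \<le> norm x + norm y" using c
      by (intro add_mono) (auto intro: mult_left_le_one_le mult_le_one simp: mult_right_le_one_le)
    finally show ?thesis .
  qed
  have n2: "norm (sin th *\<^sub>R x + cos th *\<^sub>R y) \<le> norm x + norm y"
  proof -
    have "norm (sin th *\<^sub>R x + cos th *\<^sub>R y) \<le> \<bar>sin th\<bar> * norm x + \<bar>cos th\<bar> * norm y"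
      using norm_triangle_ineq[of "sin th *\<^sub>R x" "cos th *\<^sub>R y"] by simp
    also have "\<dots> \<le> norm x + norm y" using c
      by (intro add_mono) (auto intro: mult_left_le_one_le mult_le_one simp: mult_right_le_one_le)
    finally show ?thesis .
  qed
  have "sqrt ((norm (cos th *\<^sub>R x - sin th *\<^sub>R y))\<^sup>2 + (norm (sin th *\<^sub>R x + cos th *\<^sub>R y))\<^sup>2)
     \<le> sqrt ((norm (cos th *\<^sub>R x - sin th *\<^sub>R y) + norm (sin th *\<^sub>R x + cos th *\<^sub>R y))\<^sup>2)"
    by (intro real_sqrt_le_mono) (simp add: power2_eq_square algebra_simps)
  also have "\<dots> = norm (cos th *\<^sub>R x - sin th *\<^sub>R y) + norm (sin th *\<^sub>R x + cos th *\<^sub>R y)" by simp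
  also have "\<dots> \<le> 2 * (norm x + norm y)" using n1 n2 by simp
  finally show ?thesis .
qed

lemma normC_ge:
  fixes x y :: "'b::real_normed_vector"
  shows "norm x \<le> normC (x, y)" "norm y \<le> normC (x, y)"
proof -
  have bdd: "bdd_above (range (\<lambda>th. sqrt ((norm (cos th *\<^sub>R x - sin th *\<^sub>R y))\<^sup>2 + (norm (sin th *\<^sub>R x + cos th *\<^sub>R y))\<^sup>2)))"
    using normC_term_bound[of _ x y] by (intro bdd_aboveI2) auto
  have "sqrt ((norm x)\<^sup>2 + (norm y)\<^sup>2) \<le> normC (x, y)"
    unfolding normC_def using cSUP_upper[OF _ bdd, of 0] by simp
  moreover have "norm x \<le> sqrt ((norm x)\<^sup>2 + (norm y)\<^sup>2)" "norm y \<le> sqrt ((norm x)\<^sup>2 + (norm y)\<^sup>2)"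
    by (auto intro!: real_le_rsqrt)
  ultimately show "norm x \<le> normC (x, y)" "norm y \<le> normC (x, y)" by (meson order_trans)+
qed

lemma normC_cmult:
  fixes x y :: "'b::real_normed_vector"
  shows "normC (cmult z (x, y)) \<le> sqrt 2 * cmod z * sqrt ((norm x)\<^sup>2 + (norm y)\<^sup>2)"
  unfolding normC_def
proof (rule cSUP_least)
  fix th :: real
  define a where "a = Re z"
  define b where "b = Im z"
  define p where "p = cos th * a - sin th * b"
  define q where "q = cos th * b + sin th * a"
  have pq: "p^2 + q^2 = (cmod z)^2"
  proof -
    have "p^2 + q^2 = (cos th ^2 + sin th ^2) * (a^2+b^2)"
      unfolding p_def q_def power2_eq_square by algebra
    also have "\<dots> = (cmod z)^2" by (simp add: a_def b_def cmod_def)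
    finally show ?thesis .
  qed
  have f: "cos th *\<^sub>R fst (cmult z (x, y)) - sin th *\<^sub>R snd (cmult z (x, y)) = p *\<^sub>R x - q *\<^sub>R y"
    unfolding cmult_def p_def q_def a_def b_def by (simp add: algebra_simps)
  have s: "sin th *\<^sub>R fst (cmult z (x, y)) + cos th *\<^sub>R snd (cmult z (x, y)) = q *\<^sub>R x + p *\<^sub>R y"
    unfolding cmult_def p_def q_def a_def b_def by (simp add: algebra_simps)
  have n1: "norm (p *\<^sub>R x - q *\<^sub>R y) \<le> \<bar>p\<bar> * norm x + \<bar>q\<bar> * norm y"
    using norm_triangle_ineq4[of "p *\<^sub>R x" "q *\<^sub>R y"] by simp
  have n2: "norm (q *\<^sub>R x + p *\<^sub>R y) \<le> \<bar>q\<bar> * norm x + \<bar>p\<bar> * norm y"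
    using norm_triangle_ineq[of "q *\<^sub>R x" "p *\<^sub>R y"] by simp
  have "(norm (p *\<^sub>R x - q *\<^sub>R y))^2 + (norm (q *\<^sub>R x + p *\<^sub>R y))^2
     \<le> (\<bar>p\<bar> * norm x + \<bar>q\<bar> * norm y)^2 + (\<bar>q\<bar> * norm x + \<bar>p\<bar> * norm y)^2"
    using n1 n2 by (intro add_mono power_mono) auto
  also have "\<dots> \<le> 2*(\<bar>p\<bar>^2+\<bar>q\<bar>^2)*((norm x)^2+(norm y)^2)"
    by (rule sq_bound) auto
  also have "\<dots> = (sqrt 2 * cmod z * sqrt ((norm x)\<^sup>2 + (norm y)\<^sup>2))^2"
    using pq by (simp add: power_mult_distrib)
  finally have "sqrt ((norm (p *\<^sub>R x - q *\<^sub>R y))^2 + (norm (q *\<^sub>R x + p *\<^sub>R y))^2)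
     \<le> sqrt ((sqrt 2 * cmod z * sqrt ((norm x)\<^sup>2 + (norm y)\<^sup>2))^2)"
    by (rule real_sqrt_le_mono)
  also have "\<dots> = sqrt 2 * cmod z * sqrt ((norm x)\<^sup>2 + (norm y)\<^sup>2)" by simp
  finally show "sqrt ((norm (cos th *\<^sub>R fst (cmult z (x, y)) - sin th *\<^sub>R snd (cmult z (x, y))))\<^sup>2 +
              (norm (sin th *\<^sub>R fst (cmult z (x, y)) + cos th *\<^sub>R snd (cmult z (x, y))))\<^sup>2)
         \<le> sqrt 2 * cmod z * sqrt ((norm x)\<^sup>2 + (norm y)\<^sup>2)" unfolding f s .
qed simp

theorem lemma5p14:
  fixes V :: "'b::banach set" and S :: "('b \<Rightarrow> real) set"
    and e :: 'b and m :: "'b \<Rightarrow> real" and \<kappa> :: real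
  assumes V_sub: "subspace V" and V_dense: "closure V = UNIV"
    and S_lin: "\<forall>l\<in>S. bounded_linear l"
    and S_sep: "\<forall>x\<in>V. (\<forall>l\<in>S. l x = 0) \<longrightarrow> x = 0"
    and e_V: "e \<in> V" and e_ne: "e \<noteq> 0" and e_pos: "\<forall>l\<in>S. l e \<ge> 0"
    and e_unit: "\<forall>h\<in>V. \<exists>lam\<ge>0. lam *\<^sub>R e - h \<noteq> 0 \<and> (\<forall>l\<in>S. l (lam *\<^sub>R e - h) \<ge> 0)"
    and norm_V: "\<forall>h\<in>V. norm h = ou_norm S e h"
    and m_S: "m \<in> S_star S" and m_e: "m e = 1"
    and kappa: "0 < \<kappa>" "\<kappa> < 1"
    and m_lower: "\<forall>h\<in>coneR S. m h \<ge> \<kappa> * norm h"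
  shows "\<forall>h\<in>coneC S. \<forall>L\<in>dual_coneC S.
           deltaC S h (e, 0) = \<infinity> \<or>
           cmod (L h) \<ge> exp (- real_of_ereal (deltaC S h (e, 0))) * (\<kappa> / sqrt 2) * normC h * cmod (L (e, 0))"
proof (intro ballI)
  fix h L
  assume hC: "h \<in> coneC S" and LD: "L \<in> dual_coneC S"
  have bl: "bounded_linear m" using m_S by (simp add: S_star_def)
  interpret m: bounded_linear m by (rule bl)
  define Mc where "Mc = (\<lambda>u. Complex (m (fst u)) (m (snd u)))"
  have Mc_cm: "Mc (cmult z u) = z * Mc u" for z u
    unfolding Mc_def cmult_def
    by (simp add: complex_eq_iff m.diff m.add m.scale)
  obtain K where K: "\<And>x. norm (m x) \<le> norm x * K" "K > 0" using m.pos_bounded by blast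
  have "Mc \<in> dualC"
    unfolding dualC_def
  proof (intro CollectI conjI allI exI)
    fix u v show "Mc (u + v) = Mc u + Mc v" unfolding Mc_def by (simp add: complex_eq_iff m.add)
  next
    fix z u show "Mc (cmult z u) = z * Mc u" by (rule Mc_cm)
  next
    fix u :: "'b \<times> 'b"
    obtain x y where u: "u = (x, y)" by (cases u)
    have "cmod (Mc u) \<le> \<bar>m x\<bar> + \<bar>m y\<bar>" unfolding Mc_def u using cmod_le[of "Complex (m x) (m y)"] by simp
    also have "\<dots> \<le> norm x * K + norm y * K" using K(1)[of x] K(1)[of y] by simp
    also have "\<dots> \<le> normC u * K + normC u * K" unfolding u using normC_ge[where x=x and y=y] K(2)
      by (intro add_mono mult_right_mono) auto
    finally show "cmod (Mc u) \<le> (2 * K) * normC u" by simp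
  qed
  have e_cone: "e \<in> coneR S" using e_ne e_pos by (simp add: coneR_def)
  have Mc_nz: "Mc g \<noteq> 0" if "g \<in> coneC S" for g
  proof -
    from that obtain z x y where g: "g = cmult z (x, y)" "z \<noteq> 0" "x \<in> coneR S" "y \<in> coneR S"
      unfolding coneC_def by blast
    have "x \<noteq> 0" using g(3) by (simp add: coneR_def)
    then have "\<kappa> * norm x > 0" using kappa by simp
    moreover have "m x \<ge> \<kappa> * norm x" using m_lower g(3) by blast
    ultimately have "m x > 0" by linarith
    then have "Mc (x, y) \<noteq> 0" unfolding Mc_def by (simp add: complex_eq_iff)
    then show ?thesis using g Mc_cm by simp
  qed
  have McD: "Mc \<in> dual_coneC S" unfolding dual_coneC_def using \<open>Mc \<in> dualC\<close> Mc_nz by blast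
  have eC: "(e, 0) \<in> coneC S"
  proof -
    have "(e, 0) = cmult (Complex (1/2) (-1/2)) (e, e)" unfolding cmult_def
      by (simp add: scaleR_add_left[symmetric])
    moreover have "Complex (1/2) (-1/2) \<noteq> 0" by (simp add: complex_eq_iff)
    ultimately show ?thesis unfolding coneC_def using e_cone by blast
  qed
  have Le: "L (e, 0) \<noteq> 0" using LD eC unfolding dual_coneC_def by blast
  have Mce: "Mc (e, 0) = 1" unfolding Mc_def using m_e by (simp add: complex_eq_iff)
  have key: "\<kappa> / sqrt 2 * normC h \<le> cmod (Mc h)"
  proof -
    from hC obtain z x y where g: "h = cmult z (x, y)" "z \<noteq> 0" "x \<in> coneR S" "y \<in> coneR S"
      unfolding coneC_def by blast
    have mx: "m x \<ge> \<kappa> * norm x" "m y \<ge> \<kappa> * norm y" using m_lower g by auto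
    have "\<kappa> / sqrt 2 * normC h \<le> \<kappa> / sqrt 2 * (sqrt 2 * cmod z * sqrt ((norm x)\<^sup>2 + (norm y)\<^sup>2))"
      unfolding g using normC_cmult kappa by (intro mult_left_mono) auto
    also have "\<dots> = cmod z * sqrt ((\<kappa> * norm x)\<^sup>2 + (\<kappa> * norm y)\<^sup>2)"
      using kappa by (simp add: power_mult_distrib real_sqrt_mult distrib_left[symmetric])
    also have "\<dots> \<le> cmod z * sqrt ((m x)\<^sup>2 + (m y)\<^sup>2)"
      using mx kappa by (intro mult_left_mono real_sqrt_le_mono add_mono power_mono) auto
    also have "\<dots> = cmod (Mc h)" unfolding g Mc_cm norm_mult by (simp add: Mc_def cmod_def)
    finally show ?thesis .
  qed
  show "deltaC S h (e, 0) = \<infinity> \<or>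
           cmod (L h) \<ge> exp (- real_of_ereal (deltaC S h (e, 0))) * (\<kappa> / sqrt 2) * normC h * cmod (L (e, 0))"
  proof (cases "deltaC S h (e, 0) = \<infinity>")
    case True then show ?thesis by simp
  next
    case False
    define s where "s = Sup ((\<lambda>z. ereal (cmod z)) ` E_set S h (e, 0))"
    define i where "i = Inf ((\<lambda>z. ereal (cmod z)) ` E_set S h (e, 0))"
    have si: "0 < i" "s < \<infinity>" and dl: "deltaC S h (e, 0) = ereal (ln (real_of_ereal s / real_of_ereal i))"
      using False unfolding deltaC_def s_def i_def Let_def by (auto split: if_splits)
    have E1: "Mc h \<in> E_set S h (e, 0)" unfolding E_set_def using McD Mce
      by (metis (mono_tags, lifting) div_by_1 mem_Collect_eq)
    have E2: "L h / L (e, 0) \<in> E_set S h (e, 0)" unfolding E_set_def using LD by blast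
    have s1: "ereal (cmod (Mc h)) \<le> s" unfolding s_def using E1 by (intro Sup_upper) auto
    have i1: "i \<le> ereal (cmod (L h / L (e, 0)))" unfolding i_def using E2 by (intro Inf_lower) auto
    have "i \<le> ereal (cmod (Mc h))" unfolding i_def using E1 by (intro Inf_lower) auto
    then have "i \<le> s" using s1 by (rule order_trans)
    then obtain rs ri where rs: "s = ereal rs" and ri: "i = ereal ri" using si
      by (cases s; cases i) auto
    have ri0: "ri > 0" using si ri by simp
    have rsri: "ri \<le> rs" using \<open>i \<le> s\<close> rs ri by simp
    have rs1: "cmod (Mc h) \<le> rs" using s1 rs by simp
    have ri1: "ri \<le> cmod (L h) / cmod (L (e, 0))" using i1 ri by (simp add: norm_divide)
    have rs0: "rs > 0" using ri0 rsri by simp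
    have ex: "exp (- real_of_ereal (deltaC S h (e, 0))) = ri / rs"
      using dl rs ri ri0 rs0 by (simp add: ln_div exp_diff exp_minus)
    have Lpos: "cmod (L (e, 0)) > 0" using Le by simp
    have c0: "0 \<le> \<kappa> / sqrt 2 * normC h"
    proof -
      have "0 \<le> normC h" using normC_ge(1)[of "fst h" "snd h"] norm_ge_zero[of "fst h"] by (metis order_trans prod.collapse)
      then show ?thesis using kappa by simp
    qed
    have "ri / rs * (\<kappa> / sqrt 2) * normC h * cmod (L (e, 0))
        = ri * cmod (L (e, 0)) * ((\<kappa> / sqrt 2 * normC h) / rs)" by (simp add: field_simps)
    also have "\<dots> \<le> ri * cmod (L (e, 0)) * 1"
    proof (rule mult_left_mono)
      have "\<kappa> / sqrt 2 * normC h \<le> rs" using key rs1 by (rule order_trans)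
      then show "\<kappa> / sqrt 2 * normC h / rs \<le> 1" using rs0 by (simp add: divide_le_eq mult.commute)
      show "0 \<le> ri * cmod (L (e, 0))" using ri0 by simp
    qed
    also have "\<dots> \<le> cmod (L h)" using ri1 Lpos by (simp add: le_divide_eq)
    finally show ?thesis using ex by simp
  qed
qed

end
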